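(* For all $n,k\in\mathbb{N}$ with $n\ge k+2$, $$\tau_{n,k}^2\le \frac12\Big(1+\frac{k}{n}\Big)\Big(\frac{n}{k}\Big)^{2k}\binom{n+k}{n-k}^{-1}\le c_1^2\,k^{1/2}\Big(1-\frac{k^2}{n^2}\Big)^{1/2}\frac{(2n)^{2k}(n-k)^{n-k}}{(n+k)^{n+k}},\qquad c_1^2=\frac{e^2}{2\sqrt\pi}.$$
   Context: $T_n$ denotes the Chebyshev polynomial of the first kind of degree $n$, $T_n(\cos\theta)=\cos n\theta$. For integers $n\ge k+2$, $k\ge 1$, let $\omega_{n,k}$ be the rightmost (largest) zero of $T_n^{(k+1)}$ and define $\tau_{n,k}:=|T_n^{(k)}(\omega_{n,k})|/T_n^{(k)}(1)$. *)

theory Defs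
  imports "HOL-Computational_Algebra.Polynomial" Complex_Main
begin

fun cheb_T :: "nat \<Rightarrow> real poly" where
  "cheb_T 0 = 1"
| "cheb_T (Suc 0) = [:0, 1:]"
| "cheb_T (Suc (Suc n)) = [:0, 2:] * cheb_T (Suc n) - cheb_T n"

definition cheb_T_deriv :: "nat \<Rightarrow> nat \<Rightarrow> real poly" where
  "cheb_T_deriv n k = (pderiv ^^ k) (cheb_T n)"

definition omega :: "nat \<Rightarrow> nat \<Rightarrow> real" where
  "omega n k = Max {x :: real. poly (cheb_T_deriv n (k + 1)) x = 0}"

definition tau :: "nat \<Rightarrow> nat \<Rightarrow> real" where
  "tau n k = \<bar>poly (cheb_T_deriv n k) (omega n k)\<bar> / poly (cheb_T_deriv n k) 1"

end

theory Submission
  imports Defs "HOL-Analysis.Complex_Transcendental"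
begin

lemma cheb_T_SS_poly: "poly (cheb_T (Suc (Suc n))) x = 2*x*poly (cheb_T (Suc n)) x - poly (cheb_T n) x"
  by simp

lemma pderiv_cheb_SS: "pderiv (cheb_T (Suc (Suc n))) = [:2:] * cheb_T (Suc n) + [:0,2:] * pderiv (cheb_T (Suc n)) - pderiv (cheb_T n)"
  by (simp add: pderiv_mult pderiv_diff pderiv_pCons pderiv_smult)

lemma d1_SS: "poly (pderiv (cheb_T (Suc (Suc n)))) x = 2*poly (cheb_T (Suc n)) x + 2*x*poly (pderiv (cheb_T (Suc n))) x - poly (pderiv (cheb_T n)) x"
  unfolding pderiv_cheb_SS by simp

lemma d2_SS: "poly (pderiv (pderiv (cheb_T (Suc (Suc n))))) x = 4*poly (pderiv (cheb_T (Suc n))) x + 2*x*poly (pderiv (pderiv (cheb_T (Suc n)))) x - poly (pderiv (pderiv (cheb_T n))) x"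
  unfolding pderiv_cheb_SS by (simp add: pderiv_mult pderiv_diff pderiv_add pderiv_pCons pderiv_smult algebra_simps)

lemma T_at1: "poly (cheb_T n) 1 = 1"
  by (induct n rule: cheb_T.induct) auto

lemma T_neg: "poly (cheb_T n) (-x) = (-1)^n * poly (cheb_T n) x"
  by (induct n rule: cheb_T.induct) (auto simp: algebra_simps)

lemma T_cos: "poly (cheb_T n) (cos t) = cos (real n * t)"
proof (induct n rule: cheb_T.induct)
  case (3 n)
  have "cos (real (Suc (Suc n)) * t) = cos ((real (Suc n)) * t + t)" by (simp add: algebra_simps)
  also have "... = 2 * cos t * cos (real (Suc n) * t) - cos (real n * t)"
    using cos_add[of "real (Suc n) * t" t] cos_diff[of "real (Suc n) * t" t]
    by (simp add: algebra_simps)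
  finally show ?case using 3 by simp
qed auto

lemma id1: "(1 - x^2) * poly (pderiv (cheb_T (Suc m))) x = real (Suc m) * (poly (cheb_T m) x - x * poly (cheb_T (Suc m)) x)"
proof (induct m rule: cheb_T.induct)
  case 1 then show ?case by (simp add: power2_eq_square pderiv_pCons)
next
  case 2 then show ?case using d1_SS[of 0 x] by (simp add: pderiv_pCons power2_eq_square algebra_simps)
next
  case (3 n)
  have r: "poly (cheb_T (Suc (Suc n))) x = 2*x*poly (cheb_T (Suc n)) x - poly (cheb_T n) x" by simp
  have r2: "poly (cheb_T (Suc (Suc (Suc n)))) x = 2*x*poly (cheb_T (Suc (Suc n))) x - poly (cheb_T (Suc n)) x"
    by (rule cheb_T_SS_poly)
  have d: "poly (pderiv (cheb_T (Suc (Suc (Suc n))))) x = 2*poly (cheb_T (Suc (Suc n))) x + 2*x*poly (pderiv (cheb_T (Suc (Suc n)))) x - poly (pderiv (cheb_T (Suc n))) x"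
    by (rule d1_SS)
  show ?case using 3 r r2 d unfolding of_nat_Suc by algebra
qed

lemma ode0: "(1 - x^2) * poly (pderiv (pderiv (cheb_T n))) x - x * poly (pderiv (cheb_T n)) x + (real n)^2 * poly (cheb_T n) x = 0"
proof (induct n rule: cheb_T.induct)
  case 1 then show ?case by simp
next
  case 2 then show ?case by (simp add: pderiv_pCons)
next
  case (3 n)
  have i: "(1 - x^2) * poly (pderiv (cheb_T (Suc n))) x = real (Suc n) * (poly (cheb_T n) x - x * poly (cheb_T (Suc n)) x)"
    by (rule id1)
  have r: "poly (cheb_T (Suc (Suc n))) x = 2*x*poly (cheb_T (Suc n)) x - poly (cheb_T n) x" by simp
  show ?case using 3 i r d2_SS[of n x] d1_SS[of n x] unfolding of_nat_Suc by algebra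
qed

abbreviation yy :: "nat \<Rightarrow> nat \<Rightarrow> real \<Rightarrow> real" where
  "yy n j x \<equiv> poly (cheb_T_deriv n j) x"

lemma ctd_0[simp]: "cheb_T_deriv n 0 = cheb_T n"
  by (simp add: cheb_T_deriv_def)
lemma ctd_Suc: "cheb_T_deriv n (Suc j) = pderiv (cheb_T_deriv n j)"
  by (simp add: cheb_T_deriv_def)

lemma DERIV_yy: "DERIV (yy n j) x :> yy n (Suc j) x"
  unfolding ctd_Suc by (rule poly_DERIV)

lemma DERIV_yy_eq [derivative_intros]: "d = yy n (Suc j) x \<Longrightarrow> ((\<lambda>x. yy n j x) has_real_derivative d) (at x within S)"
  using DERIV_yy by (auto intro: has_field_derivative_at_within)

lemma ode_j: "(1 - x^2) * yy n (Suc (Suc j)) x - (2*real j + 1) * x * yy n (Suc j) x + ((real n)^2 - (real j)^2) * yy n j x = 0"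
proof (induct j arbitrary: x)
  case 0
  show ?case using ode0[of x n] by (simp add: ctd_Suc)
next
  case (Suc j)
  define f where "f = (\<lambda>x. (1 - x^2) * yy n (Suc (Suc j)) x - (2*real j + 1) * x * yy n (Suc j) x + ((real n)^2 - (real j)^2) * yy n j x)"
  have f0: "f = (\<lambda>x. 0)" using Suc unfolding f_def by auto
  have "DERIV f x :> (-2*x) * yy n (Suc (Suc j)) x + (1 - x^2) * yy n (Suc (Suc (Suc j))) x
      - (2*real j + 1) * yy n (Suc j) x - (2*real j + 1) * x * yy n (Suc (Suc j)) x + ((real n)^2 - (real j)^2) * yy n (Suc j) x"
    unfolding f_def by (auto intro!: derivative_eq_intros simp: algebra_simps power2_eq_square)
  moreover have "DERIV f x :> 0" unfolding f0 by simp
  ultimately have "(-2*x) * yy n (Suc (Suc j)) x + (1 - x^2) * yy n (Suc (Suc (Suc j))) x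
      - (2*real j + 1) * yy n (Suc j) x - (2*real j + 1) * x * yy n (Suc (Suc j)) x + ((real n)^2 - (real j)^2) * yy n (Suc j) x = 0"
    using DERIV_unique by blast
  then show ?case by (simp add: algebra_simps power2_eq_square)
qed

definition PiN :: "nat \<Rightarrow> nat \<Rightarrow> real" where
  "PiN n j = (\<Prod>i<j. (real n)^2 - (real i)^2)"
definition od :: "nat \<Rightarrow> real" where
  "od j = (\<Prod>i<j. 2 * real i + 1)"

lemma yy_at1: "yy n j 1 = PiN n j / od j"
proof (induct j)
  case 0 then show ?case by (simp add: PiN_def od_def T_at1)
next
  case (Suc j)
  have "(2*real j + 1) * yy n (Suc j) 1 = ((real n)^2 - (real j)^2) * yy n j 1"
    using ode_j[of 1 n j] by simp
  then have "yy n (Suc j) 1 = ((real n)^2 - (real j)^2) * yy n j 1 / (2*real j + 1)"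
    by (simp add: field_simps add_pos_pos)
  then show ?case using Suc by (simp add: PiN_def od_def)
qed

lemma od_pos: "od j > 0"
  unfolding od_def by (rule prod_pos) auto

lemma PiN_pos: "j \<le> n \<Longrightarrow> PiN n j > 0"
  unfolding PiN_def
proof (rule prod_pos)
  fix i assume "j \<le> n" "i \<in> {..<j}"
  then have "real i < real n" by auto
  moreover have "0 \<le> real i" by simp
  ultimately have "(real i)^2 < (real n)^2" by (rule power_strict_mono) auto
  then show "0 < (real n)^2 - (real i)^2" by simp
qed

lemma yy_at1_pos: "j \<le> n \<Longrightarrow> yy n j 1 > 0"
  using yy_at1 PiN_pos od_pos by simp

lemma yy_neg: "yy n j (-x) = (-1)^(n+j) * yy n j x"
proof (induct j arbitrary: x)
  case 0 then show ?case by (simp add: T_neg)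
next
  case (Suc j)
  have e: "(\<lambda>x. yy n j (-x)) = (\<lambda>x. (-1)^(n+j) * yy n j x)" using Suc by auto
  have "DERIV (\<lambda>x. yy n j (-x)) x :> - yy n (Suc j) (-x)"
    by (auto intro!: derivative_eq_intros simp: ctd_Suc)
  moreover have "DERIV (\<lambda>x. yy n j (-x)) x :> (-1)^(n+j) * yy n (Suc j) x"
    unfolding e by (auto intro!: derivative_eq_intros)
  ultimately have "- yy n (Suc j) (-x) = (-1)^(n+j) * yy n (Suc j) x" using DERIV_unique by blast
  then show ?case by simp
qed

lemma yy_at0_rec: "yy n (Suc (Suc j)) 0 = - ((real n)^2 - (real j)^2) * yy n j 0"
proof -
  have "yy n (Suc (Suc j)) 0 + ((real n)^2 - (real j)^2) * yy n j 0 = 0"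
    using ode_j[of 0 n j] by simp
  then show ?thesis by linarith
qed

lemma poly_rolle:
  fixes p :: "real poly"
  assumes "a < b" "poly p a = 0" "poly p b = 0"
  shows "\<exists>c. a < c \<and> c < b \<and> poly (pderiv p) c = 0"
proof -
  have "\<exists>z. a < z \<and> z < b \<and> DERIV (poly p) z :> 0"
  proof (rule Rolle)
    show "continuous_on {a..b} (poly p)" by (auto intro: continuous_intros poly_DERIV[THEN DERIV_isCont])
    show "\<And>x. a < x \<Longrightarrow> x < b \<Longrightarrow> poly p differentiable at x"
      using poly_DERIV unfolding real_differentiable_def by blast
  qed (use assms in auto)
  then obtain z where "a < z" "z < b" "DERIV (poly p) z :> 0" by blast
  moreover have "DERIV (poly p) z :> poly (pderiv p) z" by (rule poly_DERIV)
  ultimately show ?thesis using DERIV_unique by blast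
qed

lemma rolle_card:
  fixes p :: "real poly"
  assumes "finite S" "card S = Suc r" "\<forall>x\<in>S. poly p x = 0"
  shows "\<exists>T. finite T \<and> card T = r \<and> (\<forall>x\<in>T. poly (pderiv p) x = 0) \<and> (\<forall>x\<in>T. Min S < x \<and> x < Max S)"
  using assms
proof (induct r arbitrary: S)
  case 0 then show ?case by (intro exI[of _ "{}"]) auto
next
  case (Suc r)
  define s where "s = Max S"
  define S' where "S' = S - {s}"
  have ne: "S \<noteq> {}" using Suc.prems by auto
  have sS: "s \<in> S" unfolding s_def using Suc.prems ne by auto
  have fS': "finite S'" "card S' = Suc r" using Suc.prems sS unfolding S'_def by auto
  have z': "\<forall>x\<in>S'. poly p x = 0" using Suc.prems unfolding S'_def by auto
  obtain T where T: "finite T" "card T = r" "\<forall>x\<in>T. poly (pderiv p) x = 0" "\<forall>x\<in>T. Min S' < x \<and> x < Max S'"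
    using Suc.hyps[OF fS' z'] by blast
  have neS': "S' \<noteq> {}" using fS' by auto
  define s' where "s' = Max S'"
  have s'S': "s' \<in> S'" unfolding s'_def using fS' neS' by auto
  have s's: "s' < s"
  proof -
    have "s' \<in> S" "s' \<noteq> s" using s'S' unfolding S'_def by auto
    moreover have "s' \<le> s" unfolding s_def using Suc.prems \<open>s' \<in> S\<close> by auto
    ultimately show ?thesis by auto
  qed
  obtain c where c: "s' < c" "c < s" "poly (pderiv p) c = 0"
    using poly_rolle[OF s's] Suc.prems s'S' sS unfolding S'_def by auto
  have minS: "Min S \<le> Min S'"
    using fS' neS' Suc.prems unfolding S'_def by (intro Min_antimono) auto
  have minS2: "Min S \<le> s'" using Suc.prems s'S' unfolding S'_def by auto
  have cT: "c \<notin> T" using T(4) c(1) unfolding s'_def by force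
  show ?case
  proof (intro exI[of _ "insert c T"] conjI)
    show "finite (insert c T)" using T by simp
    show "card (insert c T) = Suc r" using T cT by simp
    show "\<forall>x\<in>insert c T. poly (pderiv p) x = 0" using T c by auto
    show "\<forall>x\<in>insert c T. Min S < x \<and> x < Max S"
      using T(4) c minS minS2 s's unfolding s_def[symmetric] s'_def[symmetric] by force
  qed
qed

lemma cheb_zeros:
  assumes "n > 0"
  shows "\<exists>S. finite S \<and> card S = n \<and> S \<subseteq> {-1<..<1} \<and> (\<forall>x\<in>S. poly (cheb_T n) x = 0)"
proof -
  define th where "th = (\<lambda>i::nat. (2 * real i + 1) * pi / (2 * real n))"
  have thr: "i < n \<Longrightarrow> 0 < th i \<and> th i < pi" for i
  proof -
    assume "i < n"
    then have a: "2 * real i + 1 < 2 * real n" by linarith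
    have "(2 * real i + 1) * pi < (2 * real n) * pi" using a by (intro mult_strict_right_mono) auto
    moreover have "0 < (2 * real i + 1) * pi" by simp
    ultimately show ?thesis unfolding th_def using assms by (auto simp: field_simps)
  qed
  define S where "S = (\<lambda>i. cos (th i)) ` {..<n}"
  have inj: "inj_on (\<lambda>i. cos (th i)) {..<n}"
  proof (rule inj_onI)
    fix i j assume "i \<in> {..<n}" "j \<in> {..<n}" "cos (th i) = cos (th j)"
    then have "th i = th j" using thr cos_inj_pi[of "th i" "th j"] by (auto simp: less_imp_le)
    then show "i = j" unfolding th_def using assms by (auto simp: field_simps)
  qed
  have "card S = n" unfolding S_def using card_image[OF inj] by simp
  moreover have "S \<subseteq> {-1<..<1}"
  proof
    fix x assume "x \<in> S"
    then obtain i where i: "i < n" "x = cos (th i)" unfolding S_def by auto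
    have "cos pi < cos (th i)" using thr[OF i(1)] by (intro cos_monotone_0_pi) auto
    moreover have "cos (th i) < cos 0" using thr[OF i(1)] by (intro cos_monotone_0_pi) auto
    ultimately show "x \<in> {-1<..<1}" using i by auto
  qed
  moreover have "\<forall>x\<in>S. poly (cheb_T n) x = 0"
  proof
    fix x assume "x \<in> S"
    then obtain i where i: "i < n" "x = cos (th i)" unfolding S_def by auto
    have "real n * th i = real i * pi + pi/2" unfolding th_def using assms by (simp add: field_simps)
    then have "cos (real n * th i) = 0" by (simp add: cos_add)
    then show "poly (cheb_T n) x = 0" using i T_cos by simp
  qed
  ultimately show ?thesis unfolding S_def by auto
qed

lemma deriv_zeros:
  assumes "j \<le> n"
  shows "\<exists>S. finite S \<and> card S = n - j \<and> S \<subseteq> {-1<..<1} \<and> (\<forall>x\<in>S. yy n j x = 0)"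
  using assms
proof (induct j)
  case 0
  show ?case
  proof (cases "n = 0")
    case True then show ?thesis by (intro exI[of _ "{}"]) auto
  next
    case False then show ?thesis using cheb_zeros[of n] by simp
  qed
next
  case (Suc j)
  then obtain S where S: "finite S" "card S = n - j" "S \<subseteq> {-1<..<1}" "\<forall>x\<in>S. yy n j x = 0" by auto
  have c: "card S = Suc (n - Suc j)" using S(2) Suc.prems by simp
  obtain T where T: "finite T" "card T = n - Suc j" "\<forall>x\<in>T. poly (pderiv (cheb_T_deriv n j)) x = 0"
      "\<forall>x\<in>T. Min S < x \<and> x < Max S"
    using rolle_card[OF S(1) c] S(4) by blast
  have ne: "S \<noteq> {}" using c by auto
  have "Min S \<in> S" "Max S \<in> S" using S(1) ne by auto
  then have "-1 < Min S" "Max S < 1" using S(3) by auto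
  then have "T \<subseteq> {-1<..<1}" using T(4) by force
  then show ?case using T by (auto simp: ctd_Suc)
qed

lemma degree_cheb: "degree (cheb_T n) \<le> n"
proof (induct n rule: cheb_T.induct)
  case (3 n)
  have "degree ([:0, 2:] * cheb_T (Suc n)) \<le> Suc (Suc n)"
    using degree_mult_le[of "[:0,2:]" "cheb_T (Suc n)"] 3 by simp
  moreover have "degree (cheb_T n) \<le> Suc (Suc n)" using 3 by simp
  ultimately show ?case by (simp add: degree_diff_le)
qed auto

lemma degree_ctd: "degree (cheb_T_deriv n j) \<le> n - j"
proof (induct j)
  case 0 then show ?case using degree_cheb by simp
next
  case (Suc j) then show ?case by (simp add: ctd_Suc degree_pderiv)
qed

lemma omega_props:
  assumes "k \<ge> 1" "n \<ge> k + 2"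
  shows "yy n (Suc k) (omega n k) = 0" "0 \<le> omega n k" "omega n k < 1"
    "\<And>x. omega n k < x \<Longrightarrow> x \<le> 1 \<Longrightarrow> yy n (Suc k) x > 0"
proof -
  define z where "z = cheb_T_deriv n (Suc k)"
  define Zs where "Zs = {x. poly z x = 0}"
  have om: "omega n k = Max Zs" unfolding omega_def Zs_def z_def by simp
  have z1: "poly z 1 > 0" unfolding z_def using yy_at1_pos[of "Suc k" n] assms by simp
  then have zne: "z \<noteq> 0" by auto
  have fin: "finite Zs" unfolding Zs_def using poly_roots_finite[OF zne] .
  have cardle: "card Zs \<le> n - Suc k"
    using card_poly_roots_bound[OF zne] degree_ctd[of n "Suc k"] unfolding Zs_def z_def by simp
  obtain S where S: "finite S" "card S = n - Suc k" "S \<subseteq> {-1<..<1}" "\<forall>x\<in>S. yy n (Suc k) x = 0"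
    using deriv_zeros[of "Suc k" n] assms by auto
  have SZ: "S \<subseteq> Zs" using S(4) unfolding Zs_def z_def by auto
  have "card S = card Zs" using card_mono[OF fin SZ] cardle S(2) by simp
  then have SZe: "S = Zs" using card_subset_eq[OF fin SZ] by simp
  have ne: "Zs \<noteq> {}" using S(2) assms SZe by auto
  have omZ: "omega n k \<in> Zs" unfolding om using fin ne by simp
  then show "yy n (Suc k) (omega n k) = 0" unfolding Zs_def z_def by simp
  show "omega n k < 1" using omZ SZe S(3) by auto
  obtain x where x: "x \<in> Zs" using ne by auto
  have "yy n (Suc k) (-x) = 0" using x yy_neg[of n "Suc k" x] unfolding Zs_def z_def by simp
  then have "-x \<in> Zs" unfolding Zs_def z_def by simp
  then have "-x \<le> omega n k" "x \<le> omega n k" unfolding om using fin x by auto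
  then show "0 \<le> omega n k" by linarith
  fix t assume t: "omega n k < t" "t \<le> 1"
  show "yy n (Suc k) t > 0"
  proof (rule ccontr)
    assume "\<not> yy n (Suc k) t > 0"
    then consider "yy n (Suc k) t = 0" | "yy n (Suc k) t < 0" by linarith
    then show False
    proof cases
      case 1
      then have "t \<in> Zs" unfolding Zs_def z_def by simp
      then have "t \<le> omega n k" unfolding om using fin by simp
      then show False using t by simp
    next
      case 2
      then have "t < 1" using t z1 unfolding z_def by (cases "t = 1") auto
      then obtain c where c: "t < c" "c < 1" "poly z c = 0"
        using poly_IVT_pos[of t 1 z] 2 z1 unfolding z_def by auto
      then have "c \<in> Zs" unfolding Zs_def by simp
      then have "c \<le> omega n k" unfolding om using fin by simp
      then show False using t c by simp
    qed
  qed
qed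

lemma omega_loc:
  assumes "k \<ge> 1" "n \<ge> k + 2"
  shows "real k * (real k + 1) \<le> (real n)^2 * (1 - (omega n k)^2)"
proof (rule ccontr)
  assume H: "\<not> ?thesis"
  define a where "a = omega n k"
  have a0: "0 \<le> a" and a1: "a < 1" and za: "yy n (Suc k) a = 0"
    and zpos: "\<And>x. a < x \<Longrightarrow> x \<le> 1 \<Longrightarrow> yy n (Suc k) x > 0"
    using omega_props[OF assms] unfolding a_def by auto
  have Ha: "(real n)^2 * (1 - a^2) < real k * (real k + 1)" using H unfolding a_def by simp
  define z where "z = yy n (Suc k)"
  define z1 where "z1 = yy n (Suc (Suc k))"
  define z2 where "z2 = yy n (Suc (Suc (Suc k)))"
  define g where "g = (\<lambda>x. (1 - x^2) * z1 x - real (Suc k) * x * z x)"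
  define w where "w = (\<lambda>x. (1 - x^2)^(Suc k) * (z x)^2)"
  have ode: "(1 - x^2) * z2 x = (2*real (Suc k) + 1) * x * z1 x - ((real n)^2 - (real (Suc k))^2) * z x" for x
    using ode_j[of x n "Suc k"] unfolding z_def z1_def z2_def by (simp add: algebra_simps)
  have dz: "DERIV z x :> z1 x" for x unfolding z_def z1_def by (rule DERIV_yy)
  have dz1: "DERIV z1 x :> z2 x" for x unfolding z2_def z1_def by (rule DERIV_yy)
  have dw: "DERIV w x :> 2 * (1 - x^2)^k * z x * g x" for x
    unfolding w_def g_def
    by ((rule derivative_eq_intros dz refl | simp)+, (simp add: algebra_simps power2_eq_square)?)
  have dg: "DERIV g x :> (-2*x) * z1 x + (1 - x^2) * z2 x - real (Suc k) * z x - real (Suc k) * x * z1 x" for x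
    unfolding g_def
    by ((rule derivative_eq_intros dz dz1 refl | simp)+, (simp add: algebra_simps power2_eq_square)?)
  have contw: "continuous_on {a..1} w"
    using dw by (meson DERIV_isCont continuous_at_imp_continuous_on)
  obtain xi where xi: "xi \<in> {a..1}" "\<forall>y\<in>{a..1}. w y \<le> w xi"
    using continuous_attains_sup[OF compact_Icc _ contw] a1 by auto
  define m where "m = (a + 1) / 2"
  have m: "a < m" "m < 1" unfolding m_def using a1 by auto
  have "w m > 0" unfolding w_def z_def using zpos[of m] m a0 
    by (intro mult_pos_pos zero_less_power) (auto simp: abs_square_less_1)
  moreover have "w m \<le> w xi" using xi(2) m by simp
  ultimately have wxi: "w xi > 0" by simp
  have wa: "w a = 0" unfolding w_def z_def using za by simp
  have w1: "w 1 = 0" unfolding w_def by simp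
  have xia: "a < xi" using xi wxi wa by (cases "xi = a") auto
  have xi1: "xi < 1" using xi wxi w1 by (cases "xi = 1") auto
  have Dxi: "0 < 1 - xi^2" using xia a0 xi1 by (simp add: abs_square_less_1)
  have zxi: "z xi > 0" unfolding z_def using zpos xia xi1 by simp
  have "2 * (1 - xi^2)^k * z xi * g xi = 0"
  proof (rule DERIV_local_max[OF dw])
    show "0 < min (xi - a) (1 - xi)" using xia xi1 by simp
    show "\<forall>y. \<bar>xi - y\<bar> < min (xi - a) (1 - xi) \<longrightarrow> w y \<le> w xi"
    proof (intro allI impI)
      fix y assume "\<bar>xi - y\<bar> < min (xi - a) (1 - xi)"
      then have "y \<in> {a..1}" by (auto simp: abs_less_iff)
      then show "w y \<le> w xi" using xi(2) by simp
    qed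
  qed
  then have gxi: "g xi = 0" using Dxi zxi by simp
  have "xi^2 > a^2" using xia a0 by (intro power_strict_mono) auto
  then have lt: "(real n)^2 * (1 - xi^2) < real k * (real k + 1)"
    using Ha by (smt (verit) mult_left_mono zero_le_power2)
  define gd where "gd = (-2*xi) * z1 xi + (1 - xi^2) * z2 xi - real (Suc k) * z xi - real (Suc k) * xi * z1 xi"
  have key: "(1 - xi^2) * gd = z xi * (real k * (real k + 1) - (real n)^2 * (1 - xi^2))"
  proof -
    have g0: "(1 - xi^2) * z1 xi = real (Suc k) * xi * z xi" using gxi unfolding g_def by simp
    have o: "(1 - xi^2) * z2 xi = (2*real (Suc k) + 1) * xi * z1 xi - ((real n)^2 - (real (Suc k))^2) * z xi"
      by (rule ode)
    show ?thesis unfolding gd_def using g0 o unfolding of_nat_Suc by algebra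
  qed
  have "z xi * (real k * (real k + 1) - (real n)^2 * (1 - xi^2)) > 0"
    using zxi lt by simp
  then have "(1 - xi^2) * gd > 0" using key by simp
  then have gdpos: "gd > 0" using Dxi by (simp add: zero_less_mult_iff)
  obtain d where d: "d > 0" "\<forall>h>0. h < d \<longrightarrow> g xi < g (xi + h)"
    using DERIV_pos_inc_right[OF dg[of xi, folded gd_def] gdpos] by blast
  define h where "h = min d (1 - xi) / 2"
  have h: "0 < h" "h < d" "xi + h < 1" unfolding h_def using d(1) xi1 by (auto simp: min_def field_simps)
  have "w xi < w (xi + h)"
  proof (rule DERIV_pos_imp_increasing_open[of xi "xi + h" w])
    show "xi < xi + h" using h by simp
    show "continuous_on {xi..xi + h} w"
      using dw by (meson DERIV_isCont continuous_at_imp_continuous_on)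
    fix t assume t: "xi < t" "t < xi + h"
    have "g t > 0" using d(2)[rule_format, of "t - xi"] t h gxi by simp
    moreover have "z t > 0" unfolding z_def using zpos t xia h by simp
    moreover have "0 < 1 - t^2" using t xia a0 h by (simp add: abs_square_less_1)
    ultimately show "\<exists>y. DERIV w t :> y \<and> y > 0" using dw by (intro exI[of _ "2 * (1 - t^2)^k * z t * g t"]) simp
  qed
  moreover have "w (xi + h) \<le> w xi" using xi(2) xia h by simp
  ultimately show False by simp
qed

lemma E_mono:
  assumes "k \<ge> 1" "n \<ge> k + 2"
  shows "(yy n k (omega n k))^2 * (1 - (omega n k)^2)^(k-1) * (((real n)^2 - (real k)^2) * (1 - (omega n k)^2) + real k)
     \<le> (yy n (Suc k) 0)^2 + ((real n)^2 - real k * (real k - 1)) * (yy n k 0)^2"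
proof -
  obtain kk where kk: "k = Suc kk" using assms by (cases k) auto
  define a where "a = omega n k"
  have a0: "0 \<le> a" and a1: "a < 1" and za: "yy n (Suc k) a = 0"
    using omega_props[OF assms] unfolding a_def by auto
  define y where "y = yy n k"
  define y1 where "y1 = yy n (Suc k)"
  define y2 where "y2 = yy n (Suc (Suc k))"
  define F where "F = (\<lambda>x. ((1 - x^2) * y1 x - real k * x * y x)^2 + ((real n)^2 * (1 - x^2) - real k * real kk) * (y x)^2)"
  define EE where "EE = (\<lambda>x. (1 - x^2)^kk * F x)"
  define Fd where "Fd = (\<lambda>x. 2 * ((1 - x^2) * y1 x - real k * x * y x) * ((-2*x) * y1 x + (1 - x^2) * y2 x - real k * y x - real k * x * y1 x)
      + ((real n)^2 * (-2*x)) * (y x)^2 + ((real n)^2 * (1 - x^2) - real k * real kk) * (2 * y x * y1 x))"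
  have ode: "(1 - x^2) * y2 x = (2*real k + 1) * x * y1 x - ((real n)^2 - (real k)^2) * y x" for x
    using ode_j[of x n k] unfolding y_def y1_def y2_def by (simp add: algebra_simps)
  have dy: "DERIV y x :> y1 x" for x unfolding y_def y1_def by (rule DERIV_yy)
  have dy1: "DERIV y1 x :> y2 x" for x unfolding y2_def y1_def by (rule DERIV_yy)
  have dF: "DERIV F x :> Fd x" for x
    unfolding F_def Fd_def
    by ((rule derivative_eq_intros dy dy1 refl | simp)+, (simp add: algebra_simps power2_eq_square)?)
  have idF: "(1 - x^2) * Fd x - 2 * real kk * x * F x = - 2 * real k * real kk * x * (y x)^2" for x
    using ode[of x] unfolding Fd_def F_def kk of_nat_Suc by algebra
  have dEE: "DERIV EE x :> real kk * (1 - x^2)^(kk - 1) * (-2*x) * F x + (1 - x^2)^kk * Fd x" for x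
    unfolding EE_def
    by ((rule derivative_eq_intros dF refl | simp)+, (simp add: algebra_simps power2_eq_square)?)
  have pw: "real kk * (1 - x^2)^(kk - 1) * (1 - x^2) = real kk * (1 - x^2)^kk" for x
    by (cases kk) auto
  have dEE2: "(1 - x^2) * (real kk * (1 - x^2)^(kk - 1) * (-2*x) * F x + (1 - x^2)^kk * Fd x)
      = (1 - x^2)^kk * (- 2 * real k * real kk * x * (y x)^2)" for x
  proof -
    have "(1 - x^2) * (real kk * (1 - x^2)^(kk - 1) * (-2*x) * F x + (1 - x^2)^kk * Fd x)
      = (real kk * (1 - x^2)^(kk - 1) * (1 - x^2)) * (-2*x) * F x + (1 - x^2)^kk * ((1 - x^2) * Fd x)"
      by (simp add: algebra_simps)
    also have "... = (1 - x^2)^kk * ((1 - x^2) * Fd x - 2 * real kk * x * F x)"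
      unfolding pw by (simp add: algebra_simps)
    finally show ?thesis using idF[of x] by simp
  qed
  have "EE a \<le> EE 0"
  proof (rule DERIV_nonpos_imp_nonincreasing[of 0 a EE])
    show "0 \<le> a" by (rule a0)
    fix x assume x: "0 \<le> x" "x \<le> a"
    have Dp: "0 < 1 - x^2" using x a1 by (simp add: abs_square_less_1)
    have "0 \<le> 2 * real k * real kk * x * (y x)^2" using x by simp
    then have np: "- 2 * real k * real kk * x * (y x)^2 \<le> 0" by linarith
    have "(1 - x^2)^kk * (- 2 * real k * real kk * x * (y x)^2) \<le> 0"
      by (rule mult_nonneg_nonpos[OF _ np]) (use Dp in simp)
    then have "(1 - x^2) * (real kk * (1 - x^2)^(kk - 1) * (-2*x) * F x + (1 - x^2)^kk * Fd x) \<le> 0"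
      using dEE2 by simp
    then have "real kk * (1 - x^2)^(kk - 1) * (-2*x) * F x + (1 - x^2)^kk * Fd x \<le> 0"
      using Dp by (simp add: mult_le_0_iff)
    then show "\<exists>d. DERIV EE x :> d \<and> d \<le> 0" using dEE by blast
  qed
  moreover have "EE a = (y a)^2 * (1 - a^2)^kk * (((real n)^2 - (real k)^2) * (1 - a^2) + real k)"
    unfolding EE_def F_def using za unfolding y1_def kk of_nat_Suc
    by (simp add: algebra_simps power2_eq_square)
  moreover have "EE 0 = (y1 0)^2 + ((real n)^2 - real k * real kk) * (y 0)^2"
    unfolding EE_def F_def by (simp add: power2_eq_square)
  ultimately show ?thesis unfolding a_def y_def y1_def kk by simp
qed

lemma v0: "yy n 0 0 = cos (real n * (pi/2))"
  using T_cos[of n "pi/2"] by simp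

lemma v1: "yy (Suc m) 1 0 = real (Suc m) * cos (real m * (pi/2))"
  using id1[of 0 m] T_cos[of m "pi/2"] by (simp add: ctd_Suc)

lemma v01: "yy n 0 0 * yy n 1 0 = 0 \<and> (yy n 0 0)^2 \<le> 1 \<and> (yy n 1 0)^2 \<le> (real n)^2"
proof (cases n)
  case 0 then show ?thesis by (simp add: ctd_Suc)
next
  case (Suc m)
  have e: "real m * (pi/2) = real n * (pi/2) - pi/2" using Suc by (simp add: algebra_simps)
  have c: "cos (real m * (pi/2)) = sin (real n * (pi/2))"
    unfolding e cos_diff by simp
  have "cos (real n * (pi/2)) * sin (real n * (pi/2)) = sin (real n * pi) / 2"
    using sin_double[of "real n * (pi/2)"] by (simp add: algebra_simps)
  then have "cos (real n * (pi/2)) * sin (real n * (pi/2)) = 0" by simp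
  moreover have "(sin (real n * (pi/2)))^2 \<le> 1" by (simp add: abs_square_le_1 abs_sin_le_one)
  moreover have "(cos (real n * (pi/2)))^2 \<le> 1" by (simp add: abs_square_le_1 abs_cos_le_one)
  ultimately show ?thesis using v0[of n] v1[of m] c Suc
    by (auto simp: power_mult_distrib mult_le_cancel_left1)
qed

lemma s_zero: "yy n j 0 * yy n (Suc j) 0 = 0"
proof (induct j)
  case 0 then show ?case using v01[of n] by simp
next
  case (Suc j)
  have "yy n (Suc j) 0 * yy n (Suc (Suc j)) 0 = - ((real n)^2 - (real j)^2) * (yy n j 0 * yy n (Suc j) 0)"
    by (subst yy_at0_rec) (simp add: algebra_simps)
  then show ?case using Suc by simp
qed

lemma PiN_Suc: "PiN n (Suc j) = PiN n j * ((real n)^2 - (real j)^2)"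
  unfolding PiN_def by simp

lemma s_step:
  fixes a b c v P A :: real
  assumes "v^4 * a \<le> A * P^2" "0 \<le> A" "b^2 - a*c \<ge> 0" "c \<le> a"
  shows "(a * v)^4 * c \<le> A * (P*a*b)^2"
proof (cases "c \<le> 0")
  case True
  have "(a * v)^4 * c \<le> 0" using True by (simp add: mult_nonneg_nonpos)
  also have "0 \<le> A * (P*a*b)^2" using assms by simp
  finally show ?thesis .
next
  case False
  then have c0: "c > 0" by simp
  then have a0: "a > 0" using assms by simp
  have "(a * v)^4 * c = (a^3 * c) * (v^4 * a)" by (simp add: power_mult_distrib algebra_simps power4_eq_xxxx power3_eq_cube)
  also have "... \<le> (a^3 * c) * (A * P^2)" using assms(1) a0 c0 by (intro mult_left_mono) auto
  also have "... = (a * c) * (A * P^2 * a^2)" by (simp add: algebra_simps power2_eq_square power3_eq_cube)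
  also have "... \<le> b^2 * (A * P^2 * a^2)" using assms(2,3) by (intro mult_right_mono) auto
  also have "... = A * (P*a*b)^2" by (simp add: algebra_simps power2_eq_square)
  finally show ?thesis .
qed

lemma s_bound: "(yy n j 0)^4 * ((real n)^2 - (real j)^2) \<le> (real n)^2 * (PiN n j)^2"
proof -
  have "\<forall>j. (yy n j 0)^4 * ((real n)^2 - (real j)^2) \<le> (real n)^2 * (PiN n j)^2 \<and>
            (yy n (Suc j) 0)^4 * ((real n)^2 - (real (Suc j))^2) \<le> (real n)^2 * (PiN n (Suc j))^2"
  proof
    fix j show "(yy n j 0)^4 * ((real n)^2 - (real j)^2) \<le> (real n)^2 * (PiN n j)^2 \<and>
            (yy n (Suc j) 0)^4 * ((real n)^2 - (real (Suc j))^2) \<le> (real n)^2 * (PiN n (Suc j))^2"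
    proof (induct j)
      case 0
      have h: "(yy n 0 0)^2 \<le> 1" "(yy n 1 0)^2 \<le> (real n)^2" using v01[of n] by auto
      have "(yy n 0 0)^2 * (yy n 0 0)^2 \<le> 1" using h(1) by (intro mult_le_one) auto
      then have "(yy n 0 0)^4 \<le> 1" by (simp add: power2_eq_square power4_eq_xxxx)
      then have p1: "(yy n 0 0)^4 * (real n)^2 \<le> 1 * (real n)^2"
        by (intro mult_right_mono) auto
      have "(yy n 1 0)^2 * (yy n 1 0)^2 \<le> (real n)^2 * (real n)^2" using h(2) by (intro mult_mono) auto
      then have q: "(yy n 1 0)^4 \<le> (real n)^2 * (real n)^2" by (simp add: power2_eq_square power4_eq_xxxx)
      have "(yy n 1 0)^4 * ((real n)^2 - 1) \<le> (yy n 1 0)^4 * (real n)^2"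
        by (intro mult_left_mono) auto
      also have "... \<le> ((real n)^2 * (real n)^2) * (real n)^2" using q by (intro mult_right_mono) auto
      finally have p2: "(yy n 1 0)^4 * ((real n)^2 - 1) \<le> (real n)^2 * ((real n)^2)^2" by (simp add: algebra_simps power2_eq_square)
      show ?case using p1 p2 by (simp add: PiN_def)
    next
      case (Suc j)
      have r: "yy n (Suc (Suc j)) 0 = ((real n)^2 - (real j)^2) * (- yy n j 0)" using yy_at0_rec[of n j] by (simp add: algebra_simps)
      have P2: "PiN n (Suc (Suc j)) = PiN n j * ((real n)^2 - (real j)^2) * ((real n)^2 - (real (Suc j))^2)"
        by (simp add: PiN_Suc)
      have "(((real n)^2 - (real j)^2) * (- yy n j 0))^4 * ((real n)^2 - (real (Suc (Suc j)))^2)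
          \<le> (real n)^2 * (PiN n j * ((real n)^2 - (real j)^2) * ((real n)^2 - (real (Suc j))^2))^2"
      proof (rule s_step)
        show "(- yy n j 0)^4 * ((real n)^2 - (real j)^2) \<le> (real n)^2 * (PiN n j)^2" using Suc by simp
        show "((real n)^2 - (real (Suc j))^2)^2 - ((real n)^2 - (real j)^2) * ((real n)^2 - (real (Suc (Suc j)))^2) \<ge> 0"
          by (simp add: algebra_simps power2_eq_square)
        show "(real n)^2 - (real (Suc (Suc j)))^2 \<le> (real n)^2 - (real j)^2" by (simp add: power_mono)
      qed simp
      then show ?case using Suc r P2 by simp
    qed
  qed
  then show ?thesis by blast
qed

lemma amgm_sq: "(a + b)^2 \<ge> 4 * a * (b::real)"
proof -
  have "(a + b)^2 - 4*a*b = (a - b)^2" by (simp add: power2_eq_square algebra_simps)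
  then show ?thesis by (smt (verit) zero_le_power2)
qed

lemma caseA:
  fixes N k c P v n2 L :: real
  assumes N: "N \<ge> 4*k + 4" and k: "k \<ge> 1" and c: "4*k*c^2 \<ge> 3" "c \<ge> 0" and P: "P \<ge> 0"
    and n2: "n2 = N + k^2" and v: "v^4 * N \<le> n2 * P^2" and L: "L = N*(k+1) + n2"
  shows "(N + k) * v^2 \<le> c * P * L"
proof -
  have N0: "N > 0" using N k by simp
  have n20: "n2 \<ge> 0" using n2 N0 by simp
  have L2: "L^2 \<ge> 4 * (N*(k+1)) * n2" unfolding L by (rule amgm_sq)
  have "4*k*N*((N + k) * v^2)^2 = 4*k*(N+k)^2 * (v^4 * N)" by (simp add: power2_eq_square power4_eq_xxxx algebra_simps)
  also have "... \<le> 4*k*(N+k)^2 * (n2 * P^2)" using v k by (intro mult_left_mono) auto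
  also have "... \<le> 3*N*(N*(k+1)) * 4 * n2 * P^2"
  proof -
    have "k*(N+k)^2 \<le> 3*N*(N*(k+1))"
    proof -
      have "N + k \<le> 2*N" using N k by simp
      have "(N+k)^2 \<le> (5/4*N)^2" using N k by (intro power_mono) auto
      then have "k*(N+k)^2 \<le> k*(25/16*N^2)" using k by (intro mult_left_mono) (auto simp: power2_eq_square)
      also have "... \<le> 3*N*(N*(k+1))" using k N0 by (simp add: power2_eq_square algebra_simps)
      finally show ?thesis .
    qed
    then have "4*(k*(N+k)^2) * (n2 * P^2) \<le> 4*(3*N*(N*(k+1))) * (n2 * P^2)"
      using n20 P by (intro mult_right_mono) auto
    then show ?thesis by (simp add: algebra_simps)
  qed
  also have "... \<le> 3*N*L^2*P^2"
  proof -
    have "(3*N*P^2) * (4*(N*(k+1))*n2) \<le> (3*N*P^2) * L^2" using L2 N0 by (intro mult_left_mono) auto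
    then show ?thesis by (simp add: algebra_simps)
  qed
  also have "... \<le> 4*k*c^2*N*L^2*P^2" using c N0 by (intro mult_right_mono) (auto simp: algebra_simps)
  finally have "4*k*N*((N + k) * v^2)^2 \<le> 4*k*N*(c*P*L)^2" by (simp add: power_mult_distrib algebra_simps)
  then have "((N + k) * v^2)^2 \<le> (c*P*L)^2" using k N0 by simp
  moreover have "c*P*L \<ge> 0" using c P L N0 n20 k by simp
  ultimately show ?thesis using power2_le_imp_le by blast
qed

lemma caseB:
  fixes N k c P v n2 L :: real
  assumes N: "N \<ge> 4*k + 4" and k: "k \<ge> 1" and c: "4*k*c^2 \<ge> 3" "c \<ge> 0" and P: "P \<ge> 0"
    and n2: "n2 = N + k^2" and v: "v^4 * (N - 2*k - 1) \<le> n2 * (P*N)^2" and L: "L = N*(k+1) + n2"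
  shows "v^2 \<le> c * P * L"
proof -
  have N0: "N > 0" using N k by simp
  have M0: "N - 2*k - 1 > 0" using N k by simp
  have n20: "n2 \<ge> 0" using n2 N0 by simp
  have L2: "L^2 \<ge> 4 * (N*(k+1)) * n2" unfolding L by (rule amgm_sq)
  have "4*k*(N - 2*k - 1)*(v^2)^2 = 4*k*(v^4 * (N - 2*k - 1))" by (simp add: power2_eq_square power4_eq_xxxx algebra_simps)
  also have "... \<le> 4*k*(n2 * (P*N)^2)" using v k by (intro mult_left_mono) auto
  also have "... \<le> (3*(N - 2*k - 1)*P^2) * (4*(N*(k+1))*n2)"
  proof -
    have a: "3*(N - 2*k - 1) \<ge> N" using N k by (simp add: algebra_simps)
    have "k*N \<le> N*(k+1)" using N0 by (simp add: algebra_simps)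
    also have "... \<le> 3*(N - 2*k - 1)*(k+1)" using a k by (intro mult_right_mono) auto
    finally have "k*N \<le> 3*(N - 2*k - 1)*(k+1)" .
    then have "(k*N) * (4*N*n2*P^2) \<le> (3*(N - 2*k - 1)*(k+1)) * (4*N*n2*P^2)"
      using N0 n20 P by (intro mult_right_mono) auto
    then show ?thesis by (simp add: algebra_simps power2_eq_square)
  qed
  also have "... \<le> (3*(N - 2*k - 1)*P^2) * L^2" using L2 M0 by (intro mult_left_mono) auto
  also have "... \<le> 4*k*c^2*(N - 2*k - 1)*L^2*P^2"
  proof -
    have "3 * ((N - 2*k - 1)*P^2*L^2) \<le> (4*k*c^2) * ((N - 2*k - 1)*P^2*L^2)"
      using c M0 by (intro mult_right_mono) auto
    then show ?thesis by (simp add: algebra_simps)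
  qed
  finally have "4*k*(N - 2*k - 1)*(v^2)^2 \<le> 4*k*(N - 2*k - 1)*(c*P*L)^2" by (simp add: power_mult_distrib algebra_simps)
  then have "(v^2)^2 \<le> (c*P*L)^2" using k M0 by simp
  moreover have "c*P*L \<ge> 0" using c P L N0 n20 k by simp
  ultimately show ?thesis using power2_le_imp_le by blast
qed

lemma fact2k: "(fact (2*k) :: real) = od k * 2^k * fact k"
proof (induct k)
  case 0 then show ?case by (simp add: od_def)
next
  case (Suc k)
  have "(fact (2 * Suc k) :: real) = (2*real k + 2) * (2*real k + 1) * fact (2*k)"
    by (simp add: algebra_simps)
  also have "... = od (Suc k) * 2^(Suc k) * fact (Suc k)" using Suc by (simp add: od_def algebra_simps)
  finally show ?case .
qed

lemma fact_ratio: "k \<le> n \<Longrightarrow> (fact (n+k) :: real) * real n = fact (n-k) * real (n+k) * PiN n k"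
proof (induct k)
  case 0 then show ?case by (simp add: PiN_def)
next
  case (Suc k)
  then have kn: "k < n" by simp
  have f: "(fact (n-k) :: real) = real (n-k) * fact (n - Suc k)"
    using kn by (metis Suc_diff_Suc fact_Suc of_nat_fact)
  have "(fact (n + Suc k) :: real) * real n = real (n + Suc k) * (fact (n+k) * real n)" by simp
  also have "... = real (n + Suc k) * (fact (n-k) * real (n+k) * PiN n k)" using Suc kn by simp
  also have "... = fact (n - Suc k) * real (n + Suc k) * (PiN n k * (real (n-k) * real (n+k)))"
    unfolding f by (simp add: algebra_simps)
  also have "real (n-k) * real (n+k) = (real n)^2 - (real k)^2"
    using kn by (simp add: of_nat_diff power2_eq_square algebra_simps)
  finally show ?case by (simp add: PiN_Suc)
qed

lemma Wsq: "(2^k * fact k :: real)^2 \<ge> (2*real k + 1) * (od k)^2"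
proof (induct k)
  case 0 then show ?case by (simp add: od_def)
next
  case (Suc k)
  have "(2*real (Suc k) + 1) * (od (Suc k))^2 = (2*real k + 3) * (2*real k + 1) * ((2*real k + 1) * (od k)^2)"
    by (simp add: od_def power2_eq_square algebra_simps)
  also have "... \<le> (2*real k + 3) * (2*real k + 1) * (2^k * fact k)^2"
    using Suc by (intro mult_left_mono) auto
  also have "... \<le> (4*(real k + 1)^2) * (2^k * fact k)^2"
    by (intro mult_right_mono) (auto simp: power2_eq_square algebra_simps)
  also have "... = (2^(Suc k) * fact (Suc k))^2" by (simp add: power2_eq_square algebra_simps)
  finally show ?case .
qed

lemma cbound:
  assumes k: "k \<ge> 1"
  shows "4 * real k * ((2^k * fact k / od k) * (1 + 1/real k)^(k-1) / (2*real k))^2 \<ge> 3"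
proof -
  define W where "W = (2^k * fact k / od k :: real)"
  define r where "r = (1 + 1/real k)^(k-1)"
  have kr: "real k \<ge> 1" using k by simp
  have W2: "W^2 \<ge> 2*real k + 1"
    using Wsq[of k] od_pos[of k] unfolding W_def by (simp add: power_divide field_simps)
  have "1 + real (k-1) * (1/real k) \<le> r" unfolding r_def
  proof (rule Bernoulli_inequality)
    have "0 \<le> 1/real k" by simp
    then show "- 1 \<le> 1/real k" by linarith
  qed
  moreover have "1 + real (k-1) * (1/real k) = (2*real k - 1) / real k"
    using k kr by (simp add: of_nat_diff field_simps)
  ultimately have r1: "r \<ge> (2*real k - 1) / real k" by simp
  have r0: "(2*real k - 1) / real k \<ge> 0" using kr by simp
  have "r^2 \<ge> ((2*real k - 1) / real k)^2" using r1 r0 by (intro power_mono) auto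
  then have "W^2 * r^2 \<ge> (2*real k + 1) * ((2*real k - 1) / real k)^2"
    using W2 by (intro mult_mono) auto
  moreover have "(2*real k + 1) * ((2*real k - 1) / real k)^2 \<ge> 3 * real k"
  proof -
    have "(2*real k + 1) * (2*real k - 1)^2 - 3 * real k^3 = (real k - 1) * (5 * real k^2 + real k - 1)"
      by (simp add: power2_eq_square power3_eq_cube algebra_simps)
    also have "... \<ge> 0"
    proof (intro mult_nonneg_nonneg)
      have "real k^2 \<ge> 0" by simp
      then show "0 \<le> 5 * real k^2 + real k - 1" using kr by linarith
    qed (use kr in auto)
    finally have "(2*real k + 1) * (2*real k - 1)^2 \<ge> 3 * real k^3" by simp
    then show ?thesis using kr by (simp add: power_divide field_simps power2_eq_square power3_eq_cube)
  qed
  ultimately have "W^2 * r^2 \<ge> 3 * real k" by simp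
  have "4 * real k * (W * r / (2*real k))^2 = W^2 * r^2 / real k"
    using kr by (simp add: power2_eq_square field_simps)
  moreover have "W^2 * r^2 / real k \<ge> 3" using \<open>W^2 * r^2 \<ge> 3 * real k\<close> kr by (simp add: pos_le_divide_eq)
  ultimately show ?thesis unfolding W_def[symmetric] r_def[symmetric] by simp
qed

lemma Bident:
  assumes k: "k \<ge> 1" and n: "n \<ge> k + 2"
  shows "(1/2) * (1 + real k / real n) * (real n / real k) ^ (2*k) / real ((n + k) choose (n - k))
     * (PiN n k / od k)^2 * ((real k * (real k + 1) / (real n)^2)^(k-1)
        * (((real n)^2 - (real k)^2) * (real k * (real k + 1) / (real n)^2) + real k))
   = ((2^k * fact k / od k) * (1 + 1/real k)^(k-1) / (2*real k)) * PiN n k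
        * (((real n)^2 - (real k)^2) * (real k + 1) + (real n)^2)"
proof -
  obtain kk where kk: "k = Suc kk" using k by (cases k) auto
  have kn: "k \<le> n" using n by simp
  have nk: "n - k \<le> n + k" by simp
  have e2k: "n + k - (n - k) = 2*k" using kn by simp
  have ch: "real ((n + k) choose (n - k)) = fact (n+k) / (fact (2*k) * fact (n-k))"
    using binomial_fact[OF nk] unfolding e2k by (simp add: mult.commute)
  have fr: "(fact (n+k) :: real) = fact (n-k) * real (n+k) * PiN n k / real n"
    using fact_ratio[OF kn] n by (simp add: field_simps)
  define nn where "nn = real n"
  define kr where "kr = real k"
  define P where "P = PiN n k"
  define odk where "odk = od k"
  define f where "f = (fact k :: real)"
  define t where "t = (2::real)^k"
  define R where "R = (1 + 1/kr)^kk"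
  define A where "A = ((nn/kr)^2)^kk"
  have nn0: "nn > 0" using n unfolding nn_def by simp
  have kr0: "kr > 0" using k unfolding kr_def by simp
  have P0: "P > 0" unfolding P_def using PiN_pos kn by simp
  have o0: "odk > 0" unfolding odk_def using od_pos by simp
  have f0: "f > 0" unfolding f_def by simp
  have t0: "t > 0" unfolding t_def by simp
  have nk0: "nn + kr > 0" using nn0 kr0 by simp
  have A0: "A > 0" unfolding A_def using nn0 kr0 by simp
  have ch2: "real ((n + k) choose (n - k)) = (nn + kr) * P / (nn * odk * t * f)"
    unfolding ch fr fact2k nn_def kr_def P_def odk_def t_def f_def using n
      fact_gt_zero[of "n-k", where 'a=real] od_pos[of k] by (simp add: field_simps)
  have p1: "(real n / real k) ^ (2*k) = (nn/kr)^2 * A"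
    unfolding A_def kk nn_def kr_def by (simp add: power_mult[symmetric] power_add[symmetric] mult_2_right)
  have p2: "(real k * (real k + 1) / (real n)^2)^(k-1) = R / A"
  proof -
    have e: "(real k * (real k + 1) / (real n)^2) = (1 + 1/kr) * (kr^2/nn^2)"
      unfolding kr_def nn_def using k n by (simp add: field_simps power2_eq_square)
    have "(real k * (real k + 1) / (real n)^2)^(k-1) = ((1 + 1/kr) * (kr^2/nn^2))^kk"
      unfolding e by (simp add: kk)
    also have "... = R * (kr^2/nn^2)^kk" unfolding R_def by (rule power_mult_distrib)
    also have "(kr^2/nn^2)^kk = 1/A"
    proof -
      have "(nn/kr)^2 * (kr^2/nn^2) = 1" using nn0 kr0 by (simp add: field_simps)
      then have "A * (kr^2/nn^2)^kk = 1" unfolding A_def by (metis power_mult_distrib power_one)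
      then show ?thesis using A0 by (simp add: eq_divide_eq mult.commute)
    qed
    finally show ?thesis by simp
  qed
  have p3: "(1 + 1/real k)^(k-1) = R" unfolding R_def kr_def kk by simp
  define s where "s = nn + kr"
  have s0: "s > 0" unfolding s_def using nk0 .
  have p4: "1 + real k / real n = s / nn" unfolding s_def nn_def kr_def using n by (simp add: field_simps)
  have ch3: "real ((n + k) choose (n - k)) = s * P / (nn * odk * t * f)" unfolding ch2 s_def ..
  show ?thesis
    unfolding ch3 p1 p2 p3 p4 unfolding nn_def[symmetric] kr_def[symmetric] P_def[symmetric] odk_def[symmetric]
      f_def[symmetric] t_def[symmetric]
    using nn0 kr0 P0 o0 f0 t0 s0 A0 by (simp add: field_simps power2_eq_square)
qed

lemma first_ineq:
  assumes k: "k \<ge> 1" and n: "n \<ge> k + 2"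
  shows "(tau n k)^2 \<le> (1/2) * (1 + real k / real n) * (real n / real k) ^ (2*k) / real ((n + k) choose (n - k))"
proof -
  define Bs where "Bs = (1/2) * (1 + real k / real n) * (real n / real k) ^ (2*k) / real ((n + k) choose (n - k))"
  define nn where "nn = real n"
  define kr where "kr = real k"
  define N where "N = nn^2 - kr^2"
  define P where "P = PiN n k"
  define c where "c = (2^k * fact k / od k) * (1 + 1/real k)^(k-1) / (2*real k)"
  define L where "L = N * (kr + 1) + nn^2"
  define om where "om = omega n k"
  define D where "D = 1 - om^2"
  define d0 where "d0 = kr * (kr + 1) / nn^2"
  define yw where "yw = yy n k om"
  define y1 where "y1 = yy n k 1"
  define v0 where "v0 = yy n k 0"
  define v1 where "v1 = yy n (Suc k) 0"
  define E0 where "E0 = v1^2 + (nn^2 - kr * (kr - 1)) * v0^2"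
  have kr1: "kr \<ge> 1" unfolding kr_def using k by simp
  have nn2: "nn \<ge> kr + 2" unfolding nn_def kr_def using n by simp
  have nn0: "nn > 0" using nn2 kr1 by simp
  have N4: "N \<ge> 4*kr + 4"
  proof -
    have "(kr+2)^2 \<le> nn^2" using nn2 kr1 by (intro power_mono) auto
    then show ?thesis unfolding N_def by (simp add: power2_eq_square algebra_simps)
  qed
  have N0: "N > 0" using N4 kr1 by simp
  have P0: "P > 0" unfolding P_def using PiN_pos n by simp
  have y1e: "y1 = P / od k" unfolding y1_def P_def by (rule yy_at1)
  have y10: "y1 > 0" using y1e P0 od_pos by simp
  have c0: "c \<ge> 0" unfolding c_def using od_pos[of k] by simp
  have c3: "4*kr*c^2 \<ge> 3" unfolding c_def kr_def using cbound[OF k] .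
  have tau2: "(tau n k)^2 = yw^2 / y1^2"
    unfolding tau_def yw_def y1_def om_def by (simp add: power_divide)
  have hE: "yw^2 * D^(k-1) * (N * D + kr) \<le> E0"
    using E_mono[OF k n] unfolding yw_def D_def N_def E0_def v0_def v1_def om_def nn_def kr_def by simp
  have hloc: "kr * (kr + 1) \<le> nn^2 * D"
    using omega_loc[OF k n] unfolding kr_def nn_def D_def om_def by simp
  have d0D: "d0 \<le> D" unfolding d0_def using hloc nn0 by (simp add: pos_divide_le_eq mult.commute)
  have d00: "d0 \<ge> 0" unfolding d0_def using kr1 by simp
  define P0 where "P0 = d0^(k-1) * (N * d0 + kr)"
  have d0p: "d0 > 0" unfolding d0_def using kr1 nn0 by simp
  have "N * d0 + kr > 0" using d0p N0 kr1 by (simp add: add_nonneg_pos)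
  then have P00: "P0 > 0" unfolding P0_def using d0p by simp
  have "P0 \<le> D^(k-1) * (N * D + kr)" unfolding P0_def
    using d0D d00 N0 kr1 by (intro mult_mono power_mono add_right_mono mult_left_mono) auto
  then have "yw^2 * P0 \<le> yw^2 * (D^(k-1) * (N * D + kr))" by (intro mult_left_mono) auto
  with hE have h1: "yw^2 * P0 \<le> E0" by (simp add: algebra_simps)
  have h2: "E0 \<le> c * P * L"
  proof -
    have z: "v0 * v1 = 0" unfolding v0_def v1_def by (rule s_zero)
    have b0: "v0^4 * N \<le> nn^2 * P^2"
      using s_bound[of n k] unfolding v0_def N_def nn_def kr_def P_def by simp
    have b1: "v1^4 * (N - 2*kr - 1) \<le> nn^2 * (P*N)^2"
    proof -
      have "v1^4 * (nn^2 - (kr+1)^2) \<le> nn^2 * (PiN n (Suc k))^2"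
        using s_bound[of n "Suc k"] unfolding v1_def nn_def kr_def by (simp add: add.commute)
      moreover have "PiN n (Suc k) = P * N" unfolding P_def N_def nn_def kr_def by (simp add: PiN_Suc)
      moreover have "nn^2 - (kr+1)^2 = N - 2*kr - 1" unfolding N_def by (simp add: power2_eq_square algebra_simps)
      ultimately show ?thesis by simp
    qed
    have n2: "nn^2 = N + kr^2" unfolding N_def by simp
    show ?thesis
    proof (cases "v1 = 0")
      case True
      then have "E0 = (N + kr) * v0^2" unfolding E0_def N_def by (simp add: algebra_simps power2_eq_square)
      also have "... \<le> c * P * L"
        by (rule caseA[OF N4 kr1 c3 c0 _ n2 b0]) (use P0 L_def in auto)
      finally show ?thesis .
    next
      case False
      then have "v0 = 0" using z by simp
      then have "E0 = v1^2" unfolding E0_def by simp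
      also have "... \<le> c * P * L"
        by (rule caseB[OF N4 kr1 c3 c0 _ n2 b1]) (use P0 L_def in auto)
      finally show ?thesis .
    qed
  qed
  have h3: "c * P * L = Bs * y1^2 * P0"
    using Bident[OF k n] unfolding Bs_def y1e c_def P_def L_def N_def nn_def kr_def P0_def d0_def by simp
  have "yw^2 * P0 \<le> (Bs * y1^2) * P0" using h1 h2 h3 by simp
  then have "yw^2 \<le> Bs * y1^2" using P00 by simp
  then have "yw^2 / y1^2 \<le> Bs" using y10 by (simp add: pos_divide_le_eq)
  then show ?thesis using tau2 unfolding Bs_def by simp
qed

lemma ln_lower: fixes t :: real assumes "t \<ge> 0" shows "2*t/(2+t) \<le> ln (1+t)"
proof -
  define f where "f = (\<lambda>x::real. ln (1+x) - 2*x/(2+x))"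
  have "f 0 \<le> f t"
  proof (rule DERIV_nonneg_imp_nondecreasing[OF assms])
    fix x :: real assume x: "0 \<le> x" "x \<le> t"
    have d: "DERIV f x :> 1/(1+x) - (2*(2+x) - 2*x)/(2+x)^2"
      unfolding f_def using x by (auto intro!: derivative_eq_intros simp: power2_eq_square)
    define E where "E = 1 + x"
    define Q where "Q = (2+x)^2"
    have E0: "E > 0" unfolding E_def using x by simp
    have Q0: "Q > 0" unfolding Q_def using x by simp
    have EQ: "4 * E \<le> Q" unfolding E_def Q_def by (simp add: power2_eq_square algebra_simps)
    have "4 / Q \<le> 1 / E" using E0 Q0 EQ by (simp add: divide_simps)
    moreover have "(2*(2+x) - 2*x) = (4::real)" by simp
    ultimately have "1/(1+x) - (2*(2+x) - 2*x)/(2+x)^2 \<ge> 0" unfolding E_def Q_def by simp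
    then show "\<exists>y. DERIV f x :> y \<and> 0 \<le> y" using d by blast
  qed
  then show ?thesis unfolding f_def by simp
qed

lemma ln_upper: fixes t :: real assumes "t \<ge> 0" shows "ln (1+t) \<le> t*(6+t)/(6+4*t)"
proof -
  define f where "f = (\<lambda>x::real. x*(6+x)/(6+4*x) - ln (1+x))"
  have "f 0 \<le> f t"
  proof (rule DERIV_nonneg_imp_nondecreasing[OF assms])
    fix x :: real assume x: "0 \<le> x" "x \<le> t"
    have d: "DERIV f x :> (((6+x) + x) * (6+4*x) - x*(6+x)*4)/(6+4*x)^2 - 1/(1+x)"
      unfolding f_def using x by (auto intro!: derivative_eq_intros simp: power2_eq_square)
    define E where "E = 1 + x"
    define Q where "Q = (6+4*x)^2"
    have E0: "E > 0" unfolding E_def using x by simp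
    have Q0: "Q > 0" unfolding Q_def using x by simp
    have EQ: "Q \<le> (((6+x) + x) * (6+4*x) - x*(6+x)*4) * E" unfolding E_def Q_def using x
      by (simp add: power2_eq_square algebra_simps)
    have "1 / E \<le> (((6+x) + x) * (6+4*x) - x*(6+x)*4) / Q" using E0 Q0 EQ by (simp add: divide_simps)
    then have "(((6+x) + x) * (6+4*x) - x*(6+x)*4)/(6+4*x)^2 - 1/(1+x) \<ge> 0" unfolding E_def Q_def by simp
    then show "\<exists>y. DERIV f x :> y \<and> 0 \<le> y" using d by blast
  qed
  then show ?thesis unfolding f_def by simp
qed

definition bS :: "nat \<Rightarrow> real" where
  "bS m = ln (fact m) + real m - (real m + 1/2) * ln (real m)"

lemma bS_diff: assumes "m \<ge> 1"
  shows "bS m - bS (Suc m) = (real m + 1/2) * ln (1 + 1/real m) - 1"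
proof -
  have m0: "real m > 0" using assms by simp
  have f: "ln (fact (Suc m) :: real) = ln (1 + real m) + ln (fact m)"
    by (simp add: ln_mult del: of_nat_Suc)
  have h: "ln (1 + 1/real m) = ln (1 + real m) - ln (real m)"
  proof -
    have "1 + 1/real m = (1 + real m) / real m" using m0 by (simp add: field_simps)
    then show ?thesis using m0 by (simp add: ln_div)
  qed
  show ?thesis unfolding bS_def h f of_nat_Suc by (simp add: algebra_simps)
qed

lemma bS_step: assumes "m \<ge> 1"
  shows "0 \<le> bS m - bS (Suc m)" "bS m - bS (Suc m) \<le> 1/(10*real m) - 1/(10*real (Suc m))"
proof -
  define M where "M = real m"
  have m1: "M \<ge> 1" unfolding M_def using assms by simp
  define t where "t = 1/M"
  have t0: "t > 0" unfolding t_def using m1 by simp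
  have e1: "(M + 1/2) * (2*t/(2+t)) = 1"
  proof -
    define G where "G = 2*M + 1"
    have G0: "G > 0" unfolding G_def using m1 by simp
    have "2 + t = G / M" unfolding t_def G_def using m1 by (simp add: field_simps)
    then have "2*t/(2+t) = 2 / G" unfolding t_def using m1 G0 by (simp add: field_simps)
    then show ?thesis unfolding G_def using m1 by (simp add: field_simps)
  qed
  moreover have "(M + 1/2) * (2*t/(2+t)) \<le> (M + 1/2) * ln (1+t)"
    using ln_lower[of t] t0 m1 by (intro mult_left_mono) auto
  ultimately show "0 \<le> bS m - bS (Suc m)" unfolding bS_diff[OF assms] t_def M_def by simp
  have "(M + 1/2) * ln (1+t) \<le> (M + 1/2) * (t*(6+t)/(6+4*t))"
    using ln_upper[of t] t0 m1 by (intro mult_left_mono) auto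
  also have "(M + 1/2) * (t*(6+t)/(6+4*t)) \<le> 1 + 1/(10*M*(M+1))"
  proof -
    define G where "G = 6*M + 4"
    define K where "K = 6*M + 1"
    define H where "H = 10*M*(M+1)"
    have G0: "G > 0" unfolding G_def using m1 by simp
    have H0: "H > 0" unfolding H_def using m1 by simp
    have M0: "M > 0" using m1 by simp
    have "t*(6+t)/(6+4*t) = K / (M * G)"
    proof -
      have a: "6 + 4*t = G / M" unfolding t_def G_def using m1 by (simp add: field_simps)
      have b: "6 + t = K / M" unfolding t_def K_def using m1 by (simp add: field_simps)
      show ?thesis unfolding a b unfolding t_def using M0 G0 by (simp add: field_simps)
    qed
    moreover have "(M + 1/2) * (K / (M * G)) \<le> (H + 1) / H"
    proof -
      have "(M + 1/2) * K * H \<le> (H + 1) * (M * G)"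
      proof -
        have "(H + 1) * (M * G) - (M + 1/2) * K * H = M * (M - 1)"
          unfolding H_def G_def K_def by (simp add: algebra_simps)
        moreover have "M * (M - 1) \<ge> 0" using m1 by simp
        ultimately show ?thesis by linarith
      qed
      then show ?thesis using M0 G0 H0 by (simp add: divide_simps)
    qed
    moreover have "(H + 1) / H = 1 + 1/(10*M*(M+1))" unfolding H_def using H0 M0
      by (simp add: H_def field_simps)
    ultimately show ?thesis by simp
  qed
  also have "1/(10*M*(M+1)) = 1/(10*M) - 1/(10*(M+1))" using m1 by (simp add: field_simps)
  finally show "bS m - bS (Suc m) \<le> 1/(10*real m) - 1/(10*real (Suc m))"
    unfolding bS_diff[OF assms] t_def M_def by (simp add: algebra_simps)
qed

lemma bS_le2: "m \<ge> 2 \<Longrightarrow> bS m \<le> bS 2"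
proof (induct m rule: dec_induct)
  case (step m)
  then show ?case using bS_step(1)[of m] by simp
qed simp

lemma bS_ge: "m \<ge> 1 \<Longrightarrow> bS m \<ge> 9/10 + 1/(10*real m)"
proof (induct m rule: dec_induct)
  case base then show ?case by (simp add: bS_def)
next
  case (step m)
  then show ?case using bS_step(2)[of m] by simp
qed

lemma bS2: "bS 2 = 2 - 3/2 * ln 2"
  unfolding bS_def by (simp add: numeral_2_eq_2)

lemma ln_fact_bS: "m \<ge> 1 \<Longrightarrow> ln (fact m :: real) = bS m - real m + (real m + 1/2) * ln (real m)"
  unfolding bS_def by simp

lemma exp_pi_bound: "11/5 + ln pi \<le> 5 * ln (2::real)"
proof -
  have e1: "exp (-1/20 :: real) \<ge> 19/20" using exp_ge_add_one_self[of "-1/20::real"] by simp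
  have "exp (1/20 :: real) = 1 / exp (-1/20)" by (simp add: exp_minus field_simps)
  also have "... \<le> 1 / (19/20)" using e1 by (intro divide_left_mono) auto
  finally have e2: "exp (1/20 :: real) \<le> 20/19" by simp
  have "exp (11/5 :: real) = exp (1/20) ^ 44" using exp_of_nat_mult[of 44 "1/20::real"] by simp
  also have "... \<le> (20/19)^44" using e2 by (intro power_mono) auto
  finally have e3: "exp (11/5 :: real) \<le> (20/19)^44" .
  have "exp (11/5 :: real) * pi \<le> (20/19)^44 * 3.1415926535899"
    using e3 pi_approx(2) by (intro mult_mono) auto
  also have "... \<le> 32" by (simp add: power_divide)
  finally have "exp (11/5 :: real) * pi \<le> 32" .
  then have "ln (exp (11/5 :: real) * pi) \<le> ln 32" by (subst ln_le_cancel_iff) auto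
  moreover have "ln (exp (11/5 :: real) * pi) = 11/5 + ln pi" by (simp add: ln_mult)
  moreover have "ln (32::real) = 5 * ln 2" using ln_realpow[of 2 5] by simp
  ultimately show ?thesis by simp
qed

lemma ln4: fixes x y z w :: real assumes "0<x" "0<y" "0<z" "0<w"
  shows "ln (x*y*z/w) = ln x + ln y + ln z - ln w"
  using assms by (simp add: ln_mult ln_div)

lemma ln6: fixes x1 x2 x3 x4 x5 w :: real assumes "0<x1" "0<x2" "0<x3" "0<x4" "0<x5" "0<w"
  shows "ln (x1*x2*x3*x4*x5/w) = ln x1 + ln x2 + ln x3 + ln x4 + ln x5 - ln w"
  using assms by (simp add: ln_mult ln_div)

lemma second_ineq:
  assumes k: "k \<ge> 1" and n: "n \<ge> k + 2"
  shows "(1/2) * (1 + real k / real n) * (real n / real k) ^ (2*k) / real ((n + k) choose (n - k))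
         \<le> (exp 2 / (2 * sqrt pi)) * sqrt (real k) * sqrt (1 - (real k)^2 / (real n)^2)
            * (2 * real n) ^ (2*k) * real (n - k) ^ (n - k) / real (n + k) ^ (n + k)"
    (is "?L \<le> ?R")
proof -
  define a where "a = real n"
  define c where "c = real k"
  define p where "p = real (n - k)"
  define q where "q = real (n + k)"
  have kn: "k \<le> n" using n by simp
  have c1: "c \<ge> 1" unfolding c_def using k by simp
  have a0: "a > 0" unfolding a_def using n by simp
  have pe: "p = a - c" unfolding p_def a_def c_def using kn by (simp add: of_nat_diff)
  have qe: "q = a + c" unfolding q_def a_def c_def by simp
  have p2: "p \<ge> 2" unfolding p_def using n by simp
  have q0: "q > 0" using qe a0 c1 by simp
  have nk: "n - k \<le> n + k" by simp
  have e2k: "n + k - (n - k) = 2*k" using kn by simp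
  define ch where "ch = real ((n + k) choose (n - k))"
  have ch: "ch = fact (n+k) / (fact (2*k) * fact (n-k))"
    unfolding ch_def using binomial_fact[OF nk] unfolding e2k by (simp add: mult.commute)
  have ch0: "ch > 0" unfolding ch by simp
  have lnch: "ln ch = ln (fact (n+k)) - ln (fact (2*k)) - ln (fact (n-k))"
    unfolding ch by (simp add: ln_div ln_mult)
  have f1: "ln (fact (2*k) :: real) = bS (2*k) - 2*c + (2*c + 1/2) * (ln 2 + ln c)"
    using ln_fact_bS[of "2*k"] k c1 unfolding c_def by (simp add: ln_mult)
  have f2: "ln (fact (n-k) :: real) = bS (n-k) - p + (p + 1/2) * ln p"
    using ln_fact_bS[of "n-k"] n unfolding p_def by simp
  have f3: "ln (fact (n+k) :: real) = bS (n+k) - q + (q + 1/2) * ln q"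
    using ln_fact_bS[of "n+k"] k unfolding q_def by simp
  have L1: "1 + real k / real n = q / a" unfolding qe a_def c_def using a0 a_def by (simp add: field_simps)
  have L2: "ln ((real n / real k) ^ (2*k)) = 2*c * (ln a - ln c)"
    using a0 c1 unfolding a_def c_def by (simp add: ln_realpow ln_div)
  have lnL: "ln ?L = - ln 2 + (ln q - ln a) + 2*c * (ln a - ln c) - ln ch"
  proof -
    have "ln ?L = ln (1/2) + ln (1 + real k / real n) + ln ((real n / real k) ^ (2*k)) - ln ch"
      unfolding ch_def[symmetric] using ch0 a0 c1 unfolding a_def c_def
      by (intro ln4) (auto simp: add_pos_pos)
    then show ?thesis unfolding L1 L2 using q0 a0 by (simp add: ln_div)
  qed
  have cpos: "1 - (real k)^2 / (real n)^2 = p * q / a^2"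
    unfolding pe qe a_def c_def using a0 a_def by (simp add: field_simps power2_eq_square)
  have pq0: "p * q / a^2 > 0" using p2 q0 a0 by simp
  have lnR: "ln ?R = (2 - ln 2 - ln pi / 2) + ln c / 2 + (ln p + ln q - 2 * ln a) / 2
       + 2*c * (ln 2 + ln a) + p * ln p - q * ln q"
  proof -
    have "ln ?R = ln (exp 2 / (2 * sqrt pi)) + ln (sqrt (real k)) + ln (sqrt (1 - (real k)^2 / (real n)^2))
       + ln ((2 * real n) ^ (2*k)) + ln (real (n - k) ^ (n - k)) - ln (real (n + k) ^ (n + k))"
      using c1 pq0 a0 p2 q0 unfolding cpos unfolding a_def c_def p_def q_def
      by (intro ln6) auto
    moreover have "ln (exp 2 / (2 * sqrt pi)) = 2 - ln 2 - ln pi / 2"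
      by (simp add: ln_div ln_mult ln_sqrt)
    moreover have "ln (sqrt (real k)) = ln c / 2" unfolding c_def using c1 c_def by (simp add: ln_sqrt)
    moreover have "ln (sqrt (1 - (real k)^2 / (real n)^2)) = (ln p + ln q - 2 * ln a) / 2"
      unfolding cpos using p2 q0 a0 by (simp add: ln_sqrt ln_div ln_mult ln_realpow)
    moreover have "ln ((2 * real n) ^ (2*k)) = 2*c * (ln 2 + ln a)"
      unfolding a_def[symmetric] c_def using a0 by (simp add: ln_realpow ln_mult algebra_simps)
    moreover have "ln (real (n - k) ^ (n - k)) = p * ln p" unfolding p_def[symmetric]
      using p2 by (simp add: ln_realpow p_def)
    moreover have "ln (real (n + k) ^ (n + k)) = q * ln q" unfolding q_def[symmetric]
      using q0 by (simp add: ln_realpow q_def)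
    ultimately show ?thesis by simp
  qed
  have diff: "ln ?L - ln ?R = bS (2*k) + bS (n-k) - bS (n+k) + ln 2 / 2 + ln pi / 2 - 2"
    unfolding lnL lnR lnch f1 f2 f3 unfolding pe qe by (simp add: algebra_simps diff_divide_distrib add_divide_distrib)
  have b1: "bS (2*k) \<le> bS 2" using k by (intro bS_le2) simp
  have b2: "bS (n-k) \<le> bS 2" using n by (intro bS_le2) simp
  have b3: "bS (n+k) \<ge> 9/10"
  proof -
    have "bS (n+k) \<ge> 9/10 + 1/(10*real (n+k))" using bS_ge[of "n+k"] k by simp
    moreover have "1/(10*real (n+k)) \<ge> 0" by simp
    ultimately show ?thesis by linarith
  qed
  have "ln ?L - ln ?R \<le> 0" using diff b1 b2 b3 bS2 exp_pi_bound by simp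
  moreover have "?L > 0" using ch0 a0 c1 unfolding ch_def[symmetric] a_def c_def by (simp add: add_pos_pos)
  moreover have "?R > 0" using pq0 a0 p2 q0 c1 unfolding cpos unfolding a_def c_def p_def q_def by simp
  ultimately show ?thesis by simp
qed

theorem theorem1p4:
  fixes n k :: nat
  assumes "k \<ge> 1" and "n \<ge> k + 2"
  shows "(tau n k)^2 \<le> (1/2) * (1 + real k / real n) * (real n / real k) ^ (2*k)
                          / real ((n + k) choose (n - k))
       \<and> (1/2) * (1 + real k / real n) * (real n / real k) ^ (2*k)
            / real ((n + k) choose (n - k))
         \<le> (exp 2 / (2 * sqrt pi)) * sqrt (real k) * sqrt (1 - (real k)^2 / (real n)^2)
            * (2 * real n) ^ (2*k) * real (n - k) ^ (n - k) / real (n + k) ^ (n + k)"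
  using first_ineq[OF assms] second_ineq[OF assms] by (rule conjI)

end
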